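(* Let $\Delta$ be a quasi-forest on $[n]$ with $s+1$ facets, of dimension $d-1$, with $f$-vector $(f_0,\ldots,f_{d-1})$, and put $f_{-1}=1$. Let $F_{s+1}, F_s, \ldots, F_1$ be a leaf order of $\Delta$ (so that for each $1\le j\le s$, $F_j$ is a leaf of $\langle F_{s+1},F_s,\ldots,F_j\rangle$). For each $1\le j\le s$ let $G_j$ be a branch of the leaf $F_j$ in $\langle F_{s+1},F_s,\ldots,F_j\rangle$. Let $\delta_j=|F_j|$ for $1\le j\le s+1$ and $e_j=|F_j\cap G_j|$ for $1\le j\le s$. Then: (a) $\sum_{i=0}^{d} f_{i-1}x^i = \sum_{j=1}^{s+1}(1+x)^{\delta_j} - \sum_{j=1}^{s}(1+x)^{e_j}$; (b) if $k_1\cdots k_{s+1}$ is a permutation of $[s+1]$ with $0<\delta_{k_1}\le\cdots\le\delta_{k_s}\le\delta_{k_{s+1}}=d$ and $\ell_1\cdots\ell_s$ is a permutation of $[s]$ with $0\le e_{\ell_1}\le\cdots\le e_{\ell_s}$, then $e_{\ell_j}<\delta_{k_j}$ for all $1\le j\le s$.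
   Context: A simplicial complex $\Delta$ on $[n]$ is a collection of subsets of $[n]$ containing all singletons and closed under taking subsets; $\dim\Delta=d-1$ where $d$ is the maximal face size; facets are maximal faces; $f_i$ is the number of faces with $i+1$ elements. For facets $F_{i_1},\ldots,F_{i_q}$, $\langle F_{i_1},\ldots,F_{i_q}\rangle$ is the subcomplex of all faces contained in some $F_{i_j}$. A facet $F$ of a complex is a leaf if there is another facet $G\neq F$ (a branch of $F$) with $H\cap F\subset G\cap F$ for all facets $H\neq F$. A quasi-forest is a simplicial complex whose facets admit an ordering (a leaf order) $H_1,\ldots,H_m$ such that for each $1<j\le m$, $H_j$ is a leaf of $\langle H_1,\ldots,H_j\rangle$. *)

theory Defs
  imports "HOL-Computational_Algebra.Polynomial"
begin

definition simplicial_complex :: "nat \<Rightarrow> nat set set \<Rightarrow> bool" where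
  "simplicial_complex n \<Delta> \<longleftrightarrow>
     (\<forall>A\<in>\<Delta>. A \<subseteq> {1..n}) \<and>
     (\<forall>i\<in>{1..n}. {i} \<in> \<Delta>) \<and>
     (\<forall>A\<in>\<Delta>. \<forall>B. B \<subseteq> A \<longrightarrow> B \<in> \<Delta>)"

definition facets :: "'a set set \<Rightarrow> 'a set set" where
  "facets \<Gamma> = {F \<in> \<Gamma>. \<forall>G\<in>\<Gamma>. F \<subseteq> G \<longrightarrow> G = F}"

definition gen :: "'a set set \<Rightarrow> 'a set set" where
  "gen S = {A. \<exists>F\<in>S. A \<subseteq> F}"

definition is_branch :: "'a set set \<Rightarrow> 'a set \<Rightarrow> 'a set \<Rightarrow> bool" where
  "is_branch \<Gamma> F G \<longleftrightarrow> F \<in> facets \<Gamma> \<and> G \<in> facets \<Gamma> \<and> G \<noteq> F \<and>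
     (\<forall>H\<in>facets \<Gamma>. H \<noteq> F \<longrightarrow> H \<inter> F \<subseteq> G \<inter> F)"

definition is_leaf :: "'a set set \<Rightarrow> 'a set \<Rightarrow> bool" where
  "is_leaf \<Gamma> F \<longleftrightarrow> (\<exists>G. is_branch \<Gamma> F G)"

definition quasi_forest :: "nat \<Rightarrow> nat set set \<Rightarrow> bool" where
  "quasi_forest n \<Delta> \<longleftrightarrow> simplicial_complex n \<Delta> \<and>
     (\<exists>(H::nat \<Rightarrow> nat set) m. inj_on H {1..m} \<and> H ` {1..m} = facets \<Delta> \<and>
        (\<forall>j\<in>{2..m}. is_leaf (gen (H ` {1..j})) (H j)))"

text \<open>fcount \<Delta> i = f_{i-1} = number of faces with i elements.\<close>
definition fcount :: "'a set set \<Rightarrow> nat \<Rightarrow> nat" where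
  "fcount \<Delta> i = card {A \<in> \<Delta>. card A = i}"

end

theory Submission
  imports Defs
begin

definition fpoly :: "nat set set \<Rightarrow> int poly" where
  "fpoly K = (\<Sum>A\<in>K. monom 1 (card A))"

lemma fpoly_Pow: "finite A \<Longrightarrow> fpoly (Pow A) = [:1,1:]^card A"
proof (induction A rule: finite_induct)
  case empty
  then show ?case by (simp add: fpoly_def monom_0 one_pCons)
next
  case (insert a A)
  have disj: "Pow A \<inter> insert a ` Pow A = {}" using insert by auto
  have inj: "inj_on (insert a) (Pow A)" using insert by (auto simp: inj_on_def) 
  have fin: "finite (Pow A)" "finite (insert a ` Pow A)" using insert by auto
  have "fpoly (Pow (insert a A)) = fpoly (Pow A) + (\<Sum>B\<in>insert a ` Pow A. monom 1 (card B))"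
    unfolding fpoly_def Pow_insert by (rule sum.union_disjoint[OF fin disj])
  also have "(\<Sum>B\<in>insert a ` Pow A. monom (1::int) (card B)) = (\<Sum>B\<in>Pow A. monom 1 (card (insert a B)))"
    by (simp add: sum.reindex[OF inj])
  also have "\<dots> = (\<Sum>B\<in>Pow A. [:0,1:] * monom 1 (card B))"
  proof (rule sum.cong[OF refl])
    fix B assume "B \<in> Pow A"
    then have "card (insert a B) = Suc (card B)" using insert finite_subset by (metis PowD card_insert_disjoint in_mono)
    then show "monom (1::int) (card (insert a B)) = [:0,1:] * monom 1 (card B)"
      by (simp add: monom_Suc)
  qed
  also have "\<dots> = [:0,1:] * fpoly (Pow A)" by (simp add: fpoly_def sum_distrib_left)
  finally show ?case using insert by (simp add: algebra_simps)
qed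


lemma fpoly_union: "finite A \<Longrightarrow> finite B \<Longrightarrow> fpoly (A \<union> B) = fpoly A + fpoly B - fpoly (A \<inter> B)"
  unfolding fpoly_def using sum.union_inter[of A B "\<lambda>A. monom (1::int) (card A)"] by (simp add: algebra_simps)

lemma fpoly_fcount:
  assumes "finite D" "\<forall>A\<in>D. card A \<le> d"
  shows "(\<Sum>i=0..d. monom (int (fcount D i)) i) = fpoly D"
proof -
  have "fpoly D = (\<Sum>i\<in>{0..d}. \<Sum>A\<in>{A\<in>D. card A = i}. monom 1 (card A))"
    unfolding fpoly_def using assms by (intro sum.group[symmetric]) auto
  also have "\<dots> = (\<Sum>i\<in>{0..d}. monom (int (fcount D i)) i)"
  proof (rule sum.cong[OF refl])
    fix i
    have "(\<Sum>A\<in>{A\<in>D. card A = i}. monom (1::int) (card A)) = (\<Sum>A\<in>{A\<in>D. card A = i}. monom 1 i)"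
      by simp
    also have "\<dots> = of_nat (fcount D i) * monom 1 i" by (simp add: fcount_def)
    also have "\<dots> = monom (int (fcount D i)) i"
      by (simp add: of_nat_poly smult_monom)
    finally show "(\<Sum>A\<in>{A\<in>D. card A = i}. monom (1::int) (card A)) = monom (int (fcount D i)) i" .
  qed
  finally show ?thesis by simp
qed


theorem lemma2p1:
  fixes n s d :: nat and \<Delta> :: "nat set set"
    and F G :: "nat \<Rightarrow> nat set" and \<delta> e :: "nat \<Rightarrow> nat"
  assumes qf: "quasi_forest n \<Delta>"
    and dim: "d = Max (card ` \<Delta>)"
    and F_inj: "inj_on F {1..s+1}"
    and F_facets: "F ` {1..s+1} = facets \<Delta>"
    and leaf: "\<forall>j\<in>{1..s}. is_leaf (gen (F ` {j..s+1})) (F j)"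
    and branch: "\<forall>j\<in>{1..s}. is_branch (gen (F ` {j..s+1})) (F j) (G j)"
    and delta: "\<forall>j\<in>{1..s+1}. \<delta> j = card (F j)"
    and e: "\<forall>j\<in>{1..s}. e j = card (F j \<inter> G j)"
  shows "(\<Sum>i=0..d. monom (int (fcount \<Delta> i)) i)
           = (\<Sum>j=1..s+1. [:1, 1:] ^ \<delta> j) - (\<Sum>j=1..s. ([:1, 1:] :: int poly) ^ e j)
     \<and> (\<forall>k l. bij_betw k {1..s+1} {1..s+1} \<and> bij_betw l {1..s} {1..s}
          \<and> 0 < \<delta> (k 1)
          \<and> (\<forall>i j. 1 \<le> i \<and> i \<le> j \<and> j \<le> s+1 \<longrightarrow> \<delta> (k i) \<le> \<delta> (k j))
          \<and> \<delta> (k (s+1)) = d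
          \<and> (\<forall>i j. 1 \<le> i \<and> i \<le> j \<and> j \<le> s \<longrightarrow> e (l i) \<le> e (l j))
          \<longrightarrow> (\<forall>j\<in>{1..s}. e (l j) < \<delta> (k j)))"
proof -
  have sc: "simplicial_complex n \<Delta>" using qf unfolding quasi_forest_def by blast
  have sc1: "\<forall>A\<in>\<Delta>. A \<subseteq> {1..n}" and sc3: "\<forall>A\<in>\<Delta>. \<forall>B. B \<subseteq> A \<longrightarrow> B \<in> \<Delta>"
    using sc unfolding simplicial_complex_def by simp_all
  have subD: "A \<in> \<Delta> \<Longrightarrow> A \<subseteq> {1..n}" for A using sc1 by simp
  have closed: "A \<in> \<Delta> \<Longrightarrow> B \<subseteq> A \<Longrightarrow> B \<in> \<Delta>" for A B using sc3 by simp
  have "\<Delta> \<subseteq> Pow {1..n}" using subD by auto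
  then have finD: "finite \<Delta>" using finite_subset by auto
  have finA: "A \<in> \<Delta> \<Longrightarrow> finite A" for A using subD finite_subset by blast
  have Fin: "i \<in> {1..s+1} \<Longrightarrow> F i \<in> facets \<Delta>" for i using F_facets by blast
  have FD: "i \<in> {1..s+1} \<Longrightarrow> F i \<in> \<Delta>" for i using Fin unfolding facets_def by blast
  have Ffin: "i \<in> {1..s+1} \<Longrightarrow> finite (F i)" for i using FD finA by blast
  have incomp: "i \<in> {1..s+1} \<Longrightarrow> j \<in> {1..s+1} \<Longrightarrow> F i \<subseteq> F j \<Longrightarrow> i = j" for i j
  proof -
    assume a: "i \<in> {1..s+1}" "j \<in> {1..s+1}" "F i \<subseteq> F j"
    then have "F i = F j" using Fin[OF a(1)] FD[OF a(2)] unfolding facets_def by blast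
    then show "i = j" using F_inj a(1,2) unfolding inj_on_def by blast
  qed
  define K where "K j = gen (F ` {j..s+1})" for j
  have facK: "facets (K j) = F ` {j..s+1}" if j: "j \<in> {1..s+1}" for j
  proof
    show "facets (K j) \<subseteq> F ` {j..s+1}"
    proof
      fix A assume "A \<in> facets (K j)"
      then have A: "A \<in> K j" "\<forall>B\<in>K j. A \<subseteq> B \<longrightarrow> B = A" unfolding facets_def by auto
      then obtain m where m: "m \<in> {j..s+1}" "A \<subseteq> F m" unfolding K_def gen_def by blast
      have "F m \<in> K j" using m unfolding K_def gen_def by blast
      then have "F m = A" using A m by blast
      then show "A \<in> F ` {j..s+1}" using m by blast
    qed
  next
    show "F ` {j..s+1} \<subseteq> facets (K j)"
    proof
      fix A assume "A \<in> F ` {j..s+1}"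
      then obtain i where i: "i \<in> {j..s+1}" "A = F i" by blast
      have "A \<in> K j" using i unfolding K_def gen_def by blast
      moreover have "\<forall>B\<in>K j. A \<subseteq> B \<longrightarrow> B = A"
      proof (intro ballI impI)
        fix B assume "B \<in> K j" "A \<subseteq> B"
        then obtain m where m: "m \<in> {j..s+1}" "B \<subseteq> F m" unfolding K_def gen_def by blast
        have "i = m" using incomp[of i m] i m \<open>A \<subseteq> B\<close> j by auto
        then show "B = A" using i m \<open>A \<subseteq> B\<close> by auto
      qed
      ultimately show "A \<in> facets (K j)" unfolding facets_def by blast
    qed
  qed
  have Gv: "\<exists>v\<in>{j+1..s+1}. G j = F v" if j: "j \<in> {1..s}" for j
  proof -
    have "G j \<in> facets (K j)" "G j \<noteq> F j" using branch j unfolding is_branch_def K_def by auto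
    moreover have "facets (K j) = F ` {j..s+1}" using facK[of j] j by auto
    ultimately have "G j \<in> F ` {j..s+1}" by simp
    then obtain v where "v \<in> {j..s+1}" "G j = F v" by blast
    moreover have "v \<noteq> j" using \<open>G j \<noteq> F j\<close> \<open>G j = F v\<close> by blast
    ultimately show ?thesis by (intro bexI[of _ v]) auto
  qed
  have Fsub: "F i \<inter> F j \<subseteq> G j \<inter> F j" if j: "j \<in> {1..s}" and i: "i \<in> {j+1..s+1}" for i j
  proof -
    have "F i \<in> facets (K j)" using facK[of j] j i by auto
    moreover have "F i \<noteq> F j" using incomp[of i j] i j by auto
    ultimately show ?thesis using branch j unfolding is_branch_def K_def by blast
  qed
  have Kdec: "K j = Pow (F j) \<union> K (j+1)" if "j \<in> {1..s}" for j
  proof -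
    have "{j..s+1} = insert j {j+1..s+1}" using that by auto
    then show ?thesis unfolding K_def gen_def by auto
  qed
  have Kint: "Pow (F j) \<inter> K (j+1) = Pow (F j \<inter> G j)" if j: "j \<in> {1..s}" for j
  proof
    show "Pow (F j) \<inter> K (j+1) \<subseteq> Pow (F j \<inter> G j)"
    proof
      fix A assume "A \<in> Pow (F j) \<inter> K (j+1)"
      then obtain i where "i \<in> {j+1..s+1}" "A \<subseteq> F i" "A \<subseteq> F j" unfolding K_def gen_def by auto
      then show "A \<in> Pow (F j \<inter> G j)" using Fsub[OF j, of i] by auto
    qed
  next
    obtain v where v: "v\<in>{j+1..s+1}" "G j = F v" using Gv[OF j] by blast
    show "Pow (F j \<inter> G j) \<subseteq> Pow (F j) \<inter> K (j+1)"
      using v unfolding K_def gen_def by auto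
  qed
  have finK: "finite (K j)" if "j \<in> {1..s+1}" for j
  proof -
    have "K j \<subseteq> \<Delta>"
    proof
      fix A assume "A \<in> K j"
      then obtain m where "m \<in> {j..s+1}" "A \<subseteq> F m" unfolding K_def gen_def by blast
      then show "A \<in> \<Delta>" using FD[of m] closed that by auto
    qed
    then show ?thesis using finD finite_subset by blast
  qed
  let ?X = "[:1, 1:] :: int poly"
  have ind: "fpoly (K j) = (\<Sum>i=j..s+1. ?X ^ \<delta> i) - (\<Sum>i=j..s. ?X ^ e i)" if "1 \<le> j" "j \<le> s+1" for j
    using that(2,1)
  proof (induction j rule: inc_induct)
    case base
    have "K (s+1) = Pow (F (s+1))" unfolding K_def gen_def by auto
    then show ?case using fpoly_Pow[OF Ffin[of "s+1"]] delta by simp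
  next
    case (step j)
    have j: "j \<in> {1..s}" using step by auto
    have "fpoly (K j) = fpoly (Pow (F j)) + fpoly (K (j+1)) - fpoly (Pow (F j \<inter> G j))"
      using Kdec[OF j] Kint[OF j] fpoly_union[of "Pow (F j)" "K (j+1)"] Ffin[of j] finK[of "j+1"] j by auto
    also have "\<dots> = ?X ^ \<delta> j + fpoly (K (j+1)) - ?X ^ e j"
    proof -
      have f1: "finite (F j)" using Ffin[of j] j by auto
      then have f2: "finite (F j \<inter> G j)" by simp
      have "fpoly (Pow (F j)) = ?X ^ \<delta> j" using fpoly_Pow[OF f1] delta j by auto
      moreover have "fpoly (Pow (F j \<inter> G j)) = ?X ^ e j" using fpoly_Pow[OF f2] e j by auto
      ultimately show ?thesis by simp
    qed
    also have "\<dots> = (\<Sum>i=j..s+1. ?X ^ \<delta> i) - (\<Sum>i=j..s. ?X ^ e i)"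
      using step.IH step.hyps j by (simp add: sum.atLeast_Suc_atMost)
    finally show ?case .
  qed
  have DK: "\<Delta> = K 1"
  proof
    show "K 1 \<subseteq> \<Delta>"
    proof
      fix A assume "A \<in> K 1"
      then obtain m where "m \<in> {1..s+1}" "A \<subseteq> F m" unfolding K_def gen_def by blast
      then show "A \<in> \<Delta>" using FD[of m] closed by auto
    qed
    show "\<Delta> \<subseteq> K 1"
    proof
      fix A assume A: "A \<in> \<Delta>"
      obtain M where M: "M \<in> \<Delta>" "A \<subseteq> M" "\<forall>B\<in>\<Delta>. M \<subseteq> B \<longrightarrow> M = B"
        using finite_has_maximal2[OF finD A] by blast
      then have "M \<in> facets \<Delta>" unfolding facets_def by auto
      then show "A \<in> K 1" using M F_facets unfolding K_def gen_def by auto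
    qed
  qed
  have partA: "(\<Sum>i=0..d. monom (int (fcount \<Delta> i)) i)
           = (\<Sum>j=1..s+1. ?X ^ \<delta> j) - (\<Sum>j=1..s. ?X ^ e j)"
  proof -
    have "\<forall>A\<in>\<Delta>. card A \<le> d" using dim finD by auto
    then have "(\<Sum>i=0..d. monom (int (fcount \<Delta> i)) i) = fpoly \<Delta>" using fpoly_fcount finD by blast
    then show ?thesis using DK ind[of 1] by simp
  qed
  have ltd: "e j < \<delta> j" if j: "j \<in> {1..s}" for j
  proof -
    obtain v where v: "v\<in>{j+1..s+1}" "G j = F v" using Gv[OF j] by blast
    have "F j \<inter> G j \<noteq> F j"
    proof
      assume "F j \<inter> G j = F j"
      then have "F j \<subseteq> F v" using v by blast
      then have "j = v" using incomp[of j v] j v by auto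
      then show False using v by auto
    qed
    then show ?thesis using e delta j Ffin[of j] by (auto intro!: psubset_card_mono)
  qed
  have ltv: "e j < \<delta> v" if j: "j \<in> {1..s}" and v: "v\<in>{j+1..s+1}" "G j = F v" for j v
  proof -
    have "F j \<inter> F v \<noteq> F v" using incomp[of v j] j v by auto
    then show ?thesis using e delta j v Ffin[of v] by (auto intro!: psubset_card_mono)
  qed
  have partB: "\<forall>k l. bij_betw k {1..s+1} {1..s+1} \<and> bij_betw l {1..s} {1..s}
          \<and> 0 < \<delta> (k 1)
          \<and> (\<forall>i j. 1 \<le> i \<and> i \<le> j \<and> j \<le> s+1 \<longrightarrow> \<delta> (k i) \<le> \<delta> (k j))
          \<and> \<delta> (k (s+1)) = d
          \<and> (\<forall>i j. 1 \<le> i \<and> i \<le> j \<and> j \<le> s \<longrightarrow> e (l i) \<le> e (l j))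
          \<longrightarrow> (\<forall>j\<in>{1..s}. e (l j) < \<delta> (k j))"
  proof (intro allI impI ballI)
    fix k l j
    assume H: "bij_betw k {1..s+1} {1..s+1} \<and> bij_betw l {1..s} {1..s}
          \<and> 0 < \<delta> (k 1)
          \<and> (\<forall>i j. 1 \<le> i \<and> i \<le> j \<and> j \<le> s+1 \<longrightarrow> \<delta> (k i) \<le> \<delta> (k j))
          \<and> \<delta> (k (s+1)) = d
          \<and> (\<forall>i j. 1 \<le> i \<and> i \<le> j \<and> j \<le> s \<longrightarrow> e (l i) \<le> e (l j))"
      and j: "j \<in> {1..s}"
    have bk: "bij_betw k {1..s+1} {1..s+1}" and bl: "bij_betw l {1..s} {1..s}"
      and sk: "\<And>i j. 1 \<le> i \<Longrightarrow> i \<le> j \<Longrightarrow> j \<le> s+1 \<Longrightarrow> \<delta> (k i) \<le> \<delta> (k j)"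
      and sl: "\<And>i j. 1 \<le> i \<Longrightarrow> i \<le> j \<Longrightarrow> j \<le> s \<Longrightarrow> e (l i) \<le> e (l j)"
      using H by auto
    show "e (l j) < \<delta> (k j)"
    proof (rule ccontr)
      assume "\<not> e (l j) < \<delta> (k j)"
      then have tk: "\<delta> (k j) \<le> e (l j)" by simp
      define t where "t = e (l j)"
      define E where "E = {i\<in>{1..s}. t \<le> e i}"
      define D where "D = {i\<in>{1..s+1}. t < \<delta> i}"
      have lE: "l ` {j..s} \<subseteq> E"
      proof
        fix x assume "x \<in> l ` {j..s}"
        then obtain m where m: "m \<in> {j..s}" "x = l m" by blast
        have "l m \<in> {1..s}" using bl m j unfolding bij_betw_def by auto
        moreover have "t \<le> e (l m)" unfolding t_def using sl[of j m] m j by auto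
        ultimately show "x \<in> E" using m unfolding E_def by auto
      qed
      have cl: "card (l ` {j..s}) = s + 1 - j"
      proof -
        have "inj_on l {j..s}" using bl j inj_on_subset unfolding bij_betw_def by fastforce
        then show ?thesis by (simp add: card_image)
      qed
      have finE: "finite E" unfolding E_def by auto
      have cE: "s + 1 - j \<le> card E" using card_mono[OF finE lE] cl by simp
      have "E \<noteq> {}" using lE j by auto
      define m where "m = Max E"
      have mE: "m \<in> E" using Max_in[OF finE \<open>E \<noteq> {}\<close>] m_def by simp
      then have m1: "m \<in> {1..s}" unfolding E_def by auto
      obtain v where v: "v\<in>{m+1..s+1}" "G m = F v" using Gv[OF m1] by blast
      have "v \<notin> E" using v Max_ge[OF finE] m_def by fastforce
      have "insert v E \<subseteq> D"
      proof
        fix x assume "x \<in> insert v E"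
        then show "x \<in> D"
        proof
          assume "x = v"
          then show ?thesis using ltv[OF m1 v] mE v m1 unfolding D_def E_def by auto
        next
          assume "x \<in> E"
          then show ?thesis using ltd[of x] unfolding D_def E_def by fastforce
        qed
      qed
      then have cD: "s + 2 - j \<le> card D"
        using card_mono[of D "insert v E"] finE \<open>v \<notin> E\<close> cE j unfolding D_def by auto
      have "D \<subseteq> k ` {j+1..s+1}"
      proof
        fix x assume x: "x \<in> D"
        then have "x \<in> k ` {1..s+1}" using bk unfolding D_def bij_betw_def by auto
        then obtain p where p: "p \<in> {1..s+1}" "x = k p" by blast
        have "j < p"
        proof (rule ccontr)
          assume "\<not> j < p"
          then have "\<delta> (k p) \<le> \<delta> (k j)" using sk[of p j] p j by auto
          then show False using x p tk unfolding D_def t_def by auto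
        qed
        then show "x \<in> k ` {j+1..s+1}" using p by auto
      qed
      then have "card D \<le> card (k ` {j+1..s+1})" by (intro card_mono) auto
      also have "\<dots> \<le> s + 1 - j" using card_image_le[of "{j+1..s+1}" k] by simp
      finally show False using cD j by auto
    qed
  qed
  show ?thesis using partA partB by blast
qed

end
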